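(* Let $\kappa$ be a regular cardinal. There is a $(\kappa,\kappa^+)$-Borel set $R\subseteq\kappa^\kappa\times\kappa^\kappa$ which is universal for the $\kappa$-Borel sets, i.e. for every $\kappa$-Borel $A\subseteq\kappa^\kappa$ there is $\xi\in\kappa^\kappa$ such that for all $\eta\in\kappa^\kappa$: $\eta\in A$ if and only if $(\eta,\xi)\in R$.
   Context: For $X\subseteq\kappa$ with $|X|<\kappa$ and $\eta:X\to\kappa$, let $N_\eta=\{\zeta\in\kappa^\kappa\mid\eta\subseteq\zeta\}$; these sets and $\emptyset$ are the basic $\kappa$-open subsets of $\kappa^\kappa$, and the basic $\kappa$-open subsets of $\kappa^\kappa\times\kappa^\kappa$ are the products $N_\eta\times N_\xi$ of basic $\kappa$-open sets. For a cardinal $\lambda$, the $(\kappa,\lambda)$-Borel sets form the smallest class containing the basic $\kappa$-open sets and closed under complements, unions of at most $\lambda$ sets and intersections of at most $\lambda$ sets; $\kappa$-Borel means $(\kappa,\kappa)$-Borel. *)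

theory Defs
  imports Main
begin

text \<open>kappa is represented by a cardinal order r on a type 'a with Field r = UNIV,
 so kappa = 'a (as a set) and kappa^kappa = UNIV :: ('a => 'a) set.\<close>

definition basic_opens :: "'a rel \<Rightarrow> ('a \<Rightarrow> 'a) set set" where
  "basic_opens r = insert {}
     {{\<zeta>. \<forall>x\<in>X. \<zeta> x = \<eta> x} | X \<eta>. (card_of X, r) \<in> ordLess}"

definition basic_opens2 :: "'a rel \<Rightarrow> (('a \<Rightarrow> 'a) \<times> ('a \<Rightarrow> 'a)) set set" where
  "basic_opens2 r = {U \<times> V | U V. U \<in> basic_opens r \<and> V \<in> basic_opens r}"

inductive_set borel_gen :: "'x set set \<Rightarrow> 'b rel \<Rightarrow> 'x set set"
  for B :: "'x set set" and lam :: "'b rel" where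
  basic: "A \<in> B \<Longrightarrow> A \<in> borel_gen B lam"
| compl: "A \<in> borel_gen B lam \<Longrightarrow> - A \<in> borel_gen B lam"
| union: "\<forall>A\<in>F. A \<in> borel_gen B lam \<Longrightarrow> (card_of F, lam) \<in> ordLeq \<Longrightarrow> \<Union>F \<in> borel_gen B lam"
| inter: "\<forall>A\<in>F. A \<in> borel_gen B lam \<Longrightarrow> (card_of F, lam) \<in> ordLeq \<Longrightarrow> \<Inter>F \<in> borel_gen B lam"

end

theory Submission
  imports Defs
begin
unbundle cardinal_syntax

locale U3 =
  fixes r :: "'a rel" and p :: "'a \<times> 'a \<Rightarrow> 'a" and i0 i1 i2 ku kc kb :: 'a
  assumes Cr: "Card_order r" and Fr: "Field r = UNIV" and inf: "infinite (UNIV::'a set)"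
    and pb: "bij p" and dist: "i0 \<noteq> i1" "i0 \<noteq> i2" "i1 \<noteq> i2" "ku \<noteq> kc" "kb \<noteq> ku" "kb \<noteq> kc"
begin

abbreviation W where "W \<equiv> cardSuc r"
abbreviation BG where "BG \<equiv> borel_gen (basic_opens2 r) W"

lemma WR: "Well_order r" using Cr card_order_on_well_order_on by blast
lemma CW: "Card_order W" using Cr cardSuc_Card_order by blast
lemma WW: "Well_order W" using CW card_order_on_well_order_on by blast
lemma wo: "wo_rel W" using WW wo_rel_def by blast
lemma infW: "infinite (Field W)"
  using Cinfinite_cardSuc[of r] Cr Fr inf by (auto simp: cinfinite_def)
lemma r_le_W: "r \<le>o W" using Cr cardSuc_ordLeq by blast
lemma r_less_W: "r <o W" using Cr cardSuc_greater by blast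
lemma UNIV_r: "|UNIV::'a set| =o r" using card_of_Field_ordIso[OF Cr] Fr by simp

lemma card_sub_W: "I \<subseteq> Field W \<Longrightarrow> |I| \<le>o W"
  using card_of_mono1 card_of_Field_ordIso[OF CW] ordLeq_ordIso_trans by blast
lemma card_UNIV_W: "|UNIV::'a set| \<le>o W"
  using UNIV_r r_le_W ordIso_ordLeq_trans by blast
lemma card_fin_less: "finite I \<Longrightarrow> Well_order s \<Longrightarrow> infinite (Field s) \<Longrightarrow> |I| <o s"
  by (rule finite_ordLess_infinite) (simp_all add: card_of_well_order_on Field_card_of)
lemma card_fin_W: "finite I \<Longrightarrow> |I| \<le>o W"
  using card_fin_less[OF _ WW infW] ordLess_imp_ordLeq by blast

lemma BG_UN: "|I| \<le>o W \<Longrightarrow> (\<And>i. i \<in> I \<Longrightarrow> S i \<in> BG) \<Longrightarrow> (\<Union>i\<in>I. S i) \<in> BG"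
  by (rule borel_gen.union) (auto intro: ordLeq_transitive[OF card_of_image])
lemma BG_INT: "|I| \<le>o W \<Longrightarrow> (\<And>i. i \<in> I \<Longrightarrow> S i \<in> BG) \<Longrightarrow> (\<Inter>i\<in>I. S i) \<in> BG"
  by (rule borel_gen.inter) (auto intro: ordLeq_transitive[OF card_of_image])
lemma BG_Un: "A \<in> BG \<Longrightarrow> B \<in> BG \<Longrightarrow> A \<union> B \<in> BG"
  using borel_gen.union[of "{A,B}"] card_fin_W[of "{A,B}"] by auto
lemma BG_Int: "A \<in> BG \<Longrightarrow> B \<in> BG \<Longrightarrow> A \<inter> B \<in> BG"
  using borel_gen.inter[of "{A,B}"] card_fin_W[of "{A,B}"] by auto

lemma bo_intro: "|X| <o r \<Longrightarrow> {\<zeta>. \<forall>x\<in>X. \<zeta> x = \<eta> x} \<in> basic_opens r"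
  unfolding basic_opens_def by (rule insertI2, rule CollectI, rule exI[of _ X], rule exI[of _ \<eta>], simp)
lemma fin_r: "finite X \<Longrightarrow> |X| <o r"
  by (rule card_fin_less[OF _ WR]) (use inf in \<open>simp_all add: Fr\<close>)
lemma bo_UNIV: "UNIV \<in> basic_opens r"
  using bo_intro[OF fin_r[of "{}"], of undefined] by simp
lemma bo_pt: "{\<zeta>. \<zeta> x = v} \<in> basic_opens r"
  using bo_intro[OF fin_r[of "{x}"], of "\<lambda>_. v"] by simp
lemma BG_basic: "U \<in> basic_opens r \<Longrightarrow> V \<in> basic_opens r \<Longrightarrow> U \<times> V \<in> BG"
  by (rule borel_gen.basic) (auto simp: basic_opens2_def)

lemma BG_preimage:
  assumes "A \<in> borel_gen B lam" and "\<And>C. C \<in> B \<Longrightarrow> g -` C \<in> borel_gen B lam"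
  shows "g -` A \<in> borel_gen B lam"
  using assms(1)
proof induction
  case (basic A) then show ?case using assms(2) by blast
next
  case (compl A) then show ?case by (simp add: vimage_Compl borel_gen.compl)
next
  case (union F)
  have "g -` \<Union>F = \<Union>((\<lambda>A. g -` A) ` F)" by auto
  moreover have "(\<lambda>A. g -` A) ` F \<in> Pow (borel_gen B lam)" using union by auto
  moreover have "|(\<lambda>A. g -` A) ` F| \<le>o lam" using ordLeq_transitive[OF card_of_image union(2)] .
  ultimately show ?case by (simp only:) (rule borel_gen.union, blast, assumption)
next
  case (inter F)
  have "g -` \<Inter>F = \<Inter>((\<lambda>A. g -` A) ` F)" by auto
  moreover have "(\<lambda>A. g -` A) ` F \<in> Pow (borel_gen B lam)" using inter by auto
  moreover have "|(\<lambda>A. g -` A) ` F| \<le>o lam" using ordLeq_transitive[OF card_of_image inter(2)] .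
  ultimately show ?case by (simp only:) (rule borel_gen.inter, blast, assumption)
qed

lemma bo_comp:
  assumes "inj m" "V \<in> basic_opens r"
  shows "{\<xi>. (\<lambda>x. \<xi> (m x)) \<in> V} \<in> basic_opens r"
proof (cases "V = {}")
  case True then show ?thesis by (simp add: basic_opens_def)
next
  case False
  then obtain X \<eta> where V: "V = {\<zeta>. \<forall>x\<in>X. \<zeta> x = \<eta> x}" and X: "|X| <o r"
    using assms(2) by (auto simp: basic_opens_def)
  have "|m ` X| <o r" using X card_of_image ordLeq_ordLess_trans by blast
  moreover have "{\<xi>. (\<lambda>x. \<xi> (m x)) \<in> V} = {\<zeta>. \<forall>y\<in>m ` X. \<zeta> y = (\<eta> \<circ> inv m) y}"
    using assms(1) by (auto simp: V)
  ultimately show ?thesis unfolding basic_opens_def by blast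
qed

lemma BG_comp:
  assumes "inj m" "A \<in> BG"
  shows "{(\<eta>,\<xi>). (\<eta>, (\<lambda>x. \<xi> (m x))) \<in> A} \<in> BG"
proof -
  let ?g = "\<lambda>(\<eta>::'a\<Rightarrow>'a,\<xi>::'a\<Rightarrow>'a). (\<eta>, (\<lambda>x. \<xi> (m x)))"
  have "?g -` A \<in> BG"
  proof (rule BG_preimage[OF assms(2)])
    fix C assume "C \<in> basic_opens2 r"
    then obtain U V where C: "C = U \<times> V" "U \<in> basic_opens r" "V \<in> basic_opens r"
      by (auto simp: basic_opens2_def)
    have "?g -` C = U \<times> {\<xi>. (\<lambda>x. \<xi> (m x)) \<in> V}" by (auto simp: C)
    then show "?g -` C \<in> BG" using BG_basic bo_comp[OF assms(1) C(3)] C(2) by simp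
  qed
  moreover have "?g -` A = {(\<eta>,\<xi>). (\<eta>, (\<lambda>x. \<xi> (m x))) \<in> A}" by auto
  ultimately show ?thesis by simp
qed


lemma Wtrans: "(a,b) \<in> W \<Longrightarrow> (b,c) \<in> W \<Longrightarrow> (a,c) \<in> W"
  using wo_rel.TRANS[OF wo] unfolding trans_def by blast
lemma Wantisym: "(a,b) \<in> W \<Longrightarrow> (b,a) \<in> W \<Longrightarrow> a = b"
  using wo_rel.ANTISYM[OF wo] unfolding antisym_def by blast
lemma Wtotal: "a \<in> Field W \<Longrightarrow> b \<in> Field W \<Longrightarrow> (a,b) \<in> W \<or> (b,a) \<in> W"
  using wo_rel.TOTALS[OF wo] by blast
lemma Wrefl: "a \<in> Field W \<Longrightarrow> (a,a) \<in> W"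
  using wo_rel.REFL[OF wo] unfolding refl_on_def by blast
lemma nomax: "a \<in> Field W \<Longrightarrow> \<exists>b\<in>Field W. a \<noteq> b \<and> (a,b) \<in> W"
  using infinite_Card_order_limit[OF CW infW] by blast
lemma FW_ne: "\<exists>a. a \<in> Field W" using infW by (metis ex_in_conv finite.emptyI)
lemma regW: "regularCard W" using infinite_cardSuc_regularCard[of r] Cr Fr inf by simp
lemma bound:
  assumes "K \<subseteq> Field W" "|K| \<le>o r"
  shows "\<exists>a\<in>Field W. \<forall>k\<in>K. (k,a) \<in> W"
proof -
  have ch: "relChain W (under W)" unfolding relChain_def under_def using Wtrans by blast
  have sub: "K \<subseteq> (\<Union>i\<in>Field W. under W i)" using assms(1) Wrefl unfolding under_def by blast
  have "|K| <o W" using assms(2) r_less_W ordLeq_ordLess_trans by blast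
  then obtain i where "i \<in> Field W" "K \<subseteq> under W i" using regularCard_UNION[OF CW regW ch sub] by blast
  then show ?thesis unfolding under_def by blast
qed

definition sl :: "('a \<Rightarrow> 'a) \<Rightarrow> 'a \<Rightarrow> ('a \<Rightarrow> 'a)" where "sl \<xi> i = (\<lambda>x. \<xi> (p (i,x)))"
definition mk :: "('a \<Rightarrow> 'a \<Rightarrow> 'a) \<Rightarrow> ('a \<Rightarrow> 'a)" where
  "mk f = (\<lambda>z. case inv p z of (i,x) \<Rightarrow> f i x)"
lemma mk_p: "mk f (p (i,x)) = f i x"
  using pb by (simp add: mk_def bij_is_inj)
lemma sl_mk: "sl (mk f) i = f i"
  unfolding sl_def mk_p by simp

definition Lset :: "('a set \<Rightarrow> (('a \<Rightarrow> 'a) \<times> ('a \<Rightarrow> 'a)) set) \<Rightarrow> 'a set \<Rightarrow> (('a \<Rightarrow> 'a) \<times> ('a \<Rightarrow> 'a)) set" where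
  "Lset U c = {z. \<exists>b\<in>underS W c. \<forall>d\<in>underS W c. (b,d) \<in> W \<longrightarrow> z \<in> U d}"
definition Phi :: "('a set \<Rightarrow> (('a \<Rightarrow> 'a) \<times> ('a \<Rightarrow> 'a)) set) \<Rightarrow> 'a set \<Rightarrow> (('a \<Rightarrow> 'a) \<times> ('a \<Rightarrow> 'a)) set" where
  "Phi U c = {(\<eta>,\<xi>). if \<xi> (p (i0,i0)) = kc then (\<eta>, sl \<xi> i1) \<notin> Lset U c
     else if \<xi> (p (i0,i0)) = ku then (\<exists>i. (\<eta>, sl (sl \<xi> i1) i) \<in> Lset U c)
     else (\<forall>x. sl \<xi> i1 x = ku \<longrightarrow> \<eta> x = sl \<xi> i2 x)}"
definition UU where "UU = wo_rel.worec W Phi"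

lemma adm: "wo_rel.adm_wo W Phi"
  unfolding wo_rel.adm_wo_def[OF wo]
proof (intro allI impI)
  fix f g :: "'a set \<Rightarrow> (('a \<Rightarrow> 'a) \<times> ('a \<Rightarrow> 'a)) set" and x
  assume h: "\<forall>y\<in>underS W x. f y = g y"
  then have "Lset f x = Lset g x" unfolding Lset_def by auto
  then show "Phi f x = Phi g x" unfolding Phi_def by simp
qed
lemma UU_eq: "UU c = Phi UU c"
  unfolding UU_def by (rule fun_cong[OF wo_rel.worec_fixpoint[OF wo adm]])

lemma Lset_BG:
  assumes "\<And>d. d \<in> underS W c \<Longrightarrow> U d \<in> BG"
  shows "Lset U c \<in> BG"
proof -
  have "Lset U c = (\<Union>b\<in>underS W c. \<Inter>d\<in>{d\<in>underS W c. (b,d) \<in> W}. U d)"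
    unfolding Lset_def by auto
  moreover have "(\<Union>b\<in>underS W c. \<Inter>d\<in>{d\<in>underS W c. (b,d) \<in> W}. U d) \<in> BG"
    by (intro BG_UN BG_INT card_sub_W assms) (auto intro: underS_Field)
  ultimately show ?thesis by simp
qed

lemma inj1: "inj (\<lambda>x. p (i,x))"
  by (rule injI) (auto dest!: injD[OF bij_is_inj[OF pb]])
lemma inj2: "inj (\<lambda>x. p (i1, p (i,x)))"
  by (rule injI) (auto dest!: injD[OF bij_is_inj[OF pb]])

lemma Phi_BG:
  assumes "\<And>d. d \<in> underS W c \<Longrightarrow> U d \<in> BG"
  shows "Phi U c \<in> BG"
proof -
  let ?L = "Lset U c"
  let ?T = "UNIV \<times> {\<xi>. \<xi> (p (i0,i0)) = kc}"
  let ?T' = "UNIV \<times> {\<xi>. \<xi> (p (i0,i0)) = ku}"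
  let ?G1 = "- {(\<eta>,\<xi>). (\<eta>, (\<lambda>x. \<xi> (p (i1,x)))) \<in> ?L}"
  let ?G2 = "\<Union>i\<in>UNIV. {(\<eta>,\<xi>). (\<eta>, (\<lambda>x. \<xi> (p (i1, p (i,x))))) \<in> ?L}"
  let ?G3 = "\<Inter>x\<in>UNIV. (- (UNIV \<times> {\<xi>. \<xi> (p (i1,x)) = ku}) \<union>
              (\<Union>v\<in>UNIV. {\<eta>. \<eta> x = v} \<times> {\<xi>. \<xi> (p (i2,x)) = v}))"
  have L: "?L \<in> BG" by (rule Lset_BG[OF assms])
  have T: "?T \<in> BG" "?T' \<in> BG" by (auto intro!: BG_basic bo_UNIV bo_pt)
  have G1: "?G1 \<in> BG" by (rule borel_gen.compl, rule BG_comp[OF inj1 L])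
  have G2: "?G2 \<in> BG" by (intro BG_UN card_UNIV_W BG_comp[OF inj2 L])
  have G3: "?G3 \<in> BG"
    by (intro BG_INT BG_UN BG_Un card_UNIV_W borel_gen.compl BG_basic bo_UNIV bo_pt)
  have eq: "Phi U c = (?T \<inter> ?G1) \<union> (- ?T \<inter> ?T' \<inter> ?G2) \<union> (- ?T \<inter> - ?T' \<inter> ?G3)"
    unfolding Phi_def sl_def by auto
  show ?thesis unfolding eq
    by (intro BG_Un BG_Int borel_gen.compl T G1 G2 G3)
qed

lemma UU_BG: "c \<in> Field W \<Longrightarrow> UU c \<in> BG"
proof (induction c rule: wo_rel.well_order_induct[OF wo])
  case (1 c)
  have IH: "\<And>y. y \<noteq> c \<Longrightarrow> (y,c) \<in> W \<Longrightarrow> y \<in> Field W \<Longrightarrow> UU y \<in> BG"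
    using 1 by blast
  have "UU d \<in> BG" if "d \<in> underS W c" for d
  proof -
    have "d \<in> Field W" using that by (rule underS_Field)
    moreover have "d \<noteq> c" "(d,c) \<in> W" using that unfolding underS_def by simp_all
    ultimately show ?thesis using IH by blast
  qed
  then show ?case by (subst UU_eq) (rule Phi_BG)
qed

definition good :: "('a \<Rightarrow> 'a) set \<Rightarrow> bool" where
  "good A \<longleftrightarrow> (\<exists>\<xi>. \<exists>b\<in>Field W. \<forall>c\<in>Field W. (b,c) \<in> W \<longrightarrow> (\<forall>\<eta>. (\<eta>,\<xi>) \<in> UU c \<longleftrightarrow> \<eta> \<in> A))"

lemma L_stab:
  assumes b: "b \<in> Field W" and h: "\<forall>d\<in>Field W. (b,d) \<in> W \<longrightarrow> (\<forall>\<eta>. (\<eta>,\<zeta>) \<in> UU d \<longleftrightarrow> \<eta> \<in> A)"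
    and c: "(b,c) \<in> W" "b \<noteq> c"
  shows "(\<eta>,\<zeta>) \<in> Lset UU c \<longleftrightarrow> \<eta> \<in> A"
proof -
  have hh: "\<And>d. d \<in> Field W \<Longrightarrow> (b,d) \<in> W \<Longrightarrow> (\<eta>,\<zeta>) \<in> UU d \<longleftrightarrow> \<eta> \<in> A"
    using h by simp
  have bu: "b \<in> underS W c" using c unfolding underS_def by simp
  show ?thesis
  proof
    assume "(\<eta>,\<zeta>) \<in> Lset UU c"
    then obtain b' where b'1: "b' \<in> underS W c" and b'2: "\<And>d. d \<in> underS W c \<Longrightarrow> (b',d) \<in> W \<Longrightarrow> (\<eta>,\<zeta>) \<in> UU d"
      unfolding Lset_def by blast
    have b'F: "b' \<in> Field W" by (rule underS_Field[OF b'1])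
    show "\<eta> \<in> A"
    proof (cases "(b,b') \<in> W")
      case True
      have "(\<eta>,\<zeta>) \<in> UU b'" using b'2[OF b'1 Wrefl[OF b'F]] .
      then show ?thesis using hh[OF b'F True] by simp
    next
      case False
      then have bb: "(b',b) \<in> W" using Wtotal[OF b b'F] by simp
      have "(\<eta>,\<zeta>) \<in> UU b" using b'2[OF bu bb] .
      then show ?thesis using hh[OF b Wrefl[OF b]] by simp
    qed
  next
    assume e: "\<eta> \<in> A"
    have "\<forall>d\<in>underS W c. (b,d) \<in> W \<longrightarrow> (\<eta>,\<zeta>) \<in> UU d"
    proof (intro ballI impI)
      fix d assume d: "d \<in> underS W c" "(b,d) \<in> W"
      show "(\<eta>,\<zeta>) \<in> UU d" using hh[OF underS_Field[OF d(1)] d(2)] e by simp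
    qed
    then show "(\<eta>,\<zeta>) \<in> Lset UU c" unfolding Lset_def using bu by blast
  qed
qed

lemma good_basic: "good {\<zeta>. \<forall>x\<in>X. \<zeta> x = \<eta>0 x}"
proof -
  define \<xi> where "\<xi> = mk (\<lambda>i. if i = i0 then (\<lambda>_. kb) else if i = i1 then (\<lambda>x. if x \<in> X then ku else kc) else \<eta>0)"
  have t: "\<xi> (p (i0,i0)) = kb" unfolding \<xi>_def mk_p by simp
  have s1: "sl \<xi> i1 = (\<lambda>x. if x \<in> X then ku else kc)" unfolding \<xi>_def sl_mk using dist by simp
  have s2: "sl \<xi> i2 = \<eta>0" unfolding \<xi>_def sl_mk using dist by simp
  obtain b where "b \<in> Field W" using FW_ne by blast
  moreover have "(\<eta>,\<xi>) \<in> UU c \<longleftrightarrow> \<eta> \<in> {\<zeta>. \<forall>x\<in>X. \<zeta> x = \<eta>0 x}" for c \<eta>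
    apply (subst UU_eq) unfolding Phi_def using t s1 s2 dist by auto
  ultimately show ?thesis unfolding good_def by blast
qed

lemma good_compl: assumes "good A" shows "good (- A)"
proof -
  obtain \<zeta> b where b: "b \<in> Field W" and h: "\<forall>c\<in>Field W. (b,c) \<in> W \<longrightarrow> (\<forall>\<eta>. (\<eta>,\<zeta>) \<in> UU c \<longleftrightarrow> \<eta> \<in> A)"
    using assms unfolding good_def by blast
  obtain b' where b': "b' \<in> Field W" "b \<noteq> b'" "(b,b') \<in> W" using nomax[OF b] by blast
  define \<xi> where "\<xi> = mk (\<lambda>i. if i = i0 then (\<lambda>_. kc) else \<zeta>)"
  have t: "\<xi> (p (i0,i0)) = kc" unfolding \<xi>_def mk_p by simp
  have s1: "sl \<xi> i1 = \<zeta>" unfolding \<xi>_def sl_mk using dist by simp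
  have "(\<eta>,\<xi>) \<in> UU c \<longleftrightarrow> \<eta> \<in> - A" if c: "c \<in> Field W" "(b',c) \<in> W" for c \<eta>
  proof -
    have bc: "(b,c) \<in> W" "b \<noteq> c" using Wtrans[OF b'(3) c(2)] Wantisym[OF b'(3)] c b' by auto
    show ?thesis apply (subst UU_eq) unfolding Phi_def using t s1 L_stab[OF b h bc] by auto
  qed
  then show ?thesis unfolding good_def using b' by blast
qed

lemma good_UNIV: "good UNIV" using good_basic[of "{}"] by simp
lemma good_empty: "good {}" using good_compl[OF good_UNIV] by simp

lemma good_union:
  assumes F: "\<forall>A\<in>F. good A" and cF: "|F| \<le>o r"
  shows "good (\<Union>F)"
proof (cases "F = {}")
  case True then show ?thesis using good_empty by simp
next
  case False
  have "|F| \<le>o |UNIV::'a set|" by (rule ordLeq_ordIso_trans[OF cF ordIso_symmetric[OF UNIV_r]])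
  then have "\<exists>g. g ` (UNIV::'a set) = F" using card_of_ordLeq2[OF False, of "UNIV::'a set"] by simp
  then obtain g :: "'a \<Rightarrow> ('a \<Rightarrow> 'a) set" where g: "g ` UNIV = F" by blast
  define G where "G i z b \<longleftrightarrow> b \<in> Field W \<and> (\<forall>c\<in>Field W. (b,c) \<in> W \<longrightarrow> (\<forall>\<eta>. (\<eta>,z) \<in> UU c \<longleftrightarrow> \<eta> \<in> g i))" for i z b
  have ex: "\<forall>i. \<exists>zb. G i (fst zb) (snd zb)"
  proof
    fix i
    have "g i \<in> F" using g by blast
    then have "good (g i)" using F by blast
    then obtain z b where "G i z b" unfolding good_def G_def by blast
    then show "\<exists>zb. G i (fst zb) (snd zb)" by (intro exI[of _ "(z,b)"]) simp
  qed
  from choice[OF ex] obtain f where f: "\<forall>i. G i (fst (f i)) (snd (f i))" by blast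
  define zz where "zz i = fst (f i)" for i
  define bb where "bb i = snd (f i)" for i
  have zb1: "\<And>i. bb i \<in> Field W" using f unfolding G_def bb_def by blast
  have zb2: "\<And>i. \<forall>c\<in>Field W. (bb i,c) \<in> W \<longrightarrow> (\<forall>\<eta>. (\<eta>,zz i) \<in> UU c \<longleftrightarrow> \<eta> \<in> g i)"
    using f unfolding G_def bb_def zz_def by blast
  have "|range bb| \<le>o r" by (rule ordLeq_ordIso_trans[OF card_of_image UNIV_r])
  moreover have "range bb \<subseteq> Field W" using zb1 by blast
  ultimately obtain a where a1: "a \<in> Field W" and a2: "\<forall>k\<in>range bb. (k, a) \<in> W"
    using bound[OF \<open>range bb \<subseteq> Field W\<close> \<open>|range bb| \<le>o r\<close>] by blast
  have a: "\<And>i. (bb i, a) \<in> W" using a2 by simp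
  obtain b' where b': "b' \<in> Field W" "a \<noteq> b'" "(a,b') \<in> W" using nomax[OF a1] by blast
  define \<xi> where "\<xi> = mk (\<lambda>i. if i = i0 then (\<lambda>_. ku) else mk zz)"
  have t: "\<xi> (p (i0,i0)) = ku" unfolding \<xi>_def mk_p by simp
  have s1: "sl (sl \<xi> i1) i = zz i" for i unfolding \<xi>_def sl_mk using dist by (simp add: sl_mk)
  have "(\<eta>,\<xi>) \<in> UU c \<longleftrightarrow> \<eta> \<in> \<Union>F" if c: "c \<in> Field W" "(b',c) \<in> W" for c \<eta>
  proof -
    have bc1: "(bb i,c) \<in> W" for i using Wtrans[OF a Wtrans[OF b'(3) c(2)]] .
    have bc2: "bb i \<noteq> c" for i
    proof
      assume "bb i = c"
      then have "(b',a) \<in> W" using Wtrans[OF c(2)] a by metis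
      then show False using Wantisym[OF b'(3)] b'(2) by simp
    qed
    have LL: "(\<eta>, zz i) \<in> Lset UU c \<longleftrightarrow> \<eta> \<in> g i" for i
      by (rule L_stab[OF zb1 zb2 bc1 bc2])
    have "(\<eta>,\<xi>) \<in> UU c \<longleftrightarrow> (\<exists>i. (\<eta>, zz i) \<in> Lset UU c)"
      apply (subst UU_eq) unfolding Phi_def using t s1 dist by simp
    also have "\<dots> \<longleftrightarrow> (\<exists>i. \<eta> \<in> g i)" using LL by simp
    also have "\<dots> \<longleftrightarrow> \<eta> \<in> \<Union>F" unfolding g[symmetric] by simp
    finally show ?thesis .
  qed
  then show ?thesis unfolding good_def using b' by blast
qed

lemma good_all: "A \<in> borel_gen (basic_opens r) r \<Longrightarrow> good A"
proof (induction rule: borel_gen.induct)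
  case (basic A)
  show ?case
  proof (cases "A = {}")
    case True then show ?thesis using good_empty by simp
  next
    case False
    then have "A \<in> {{\<zeta>. \<forall>x\<in>X. \<zeta> x = \<eta> x} | X \<eta>. |X| <o r}"
      using basic unfolding basic_opens_def by simp
    then obtain X \<eta> where "A = {\<zeta>. \<forall>x\<in>X. \<zeta> x = \<eta> x}" by blast
    then show ?thesis using good_basic by simp
  qed
next
  case (compl A) then show ?case using good_compl by simp
next
  case (union F)
  have "\<forall>A\<in>F. good A" using union(1) by simp
  then show ?case by (rule good_union) (rule union(2))
next
  case (inter F)
  have e: "\<Inter>F = - \<Union>(uminus ` F)" by auto
  have c: "|uminus ` F| \<le>o r" by (rule ordLeq_transitive[OF card_of_image inter(2)])
  have g: "\<forall>A\<in>uminus ` F. good A" using inter(1) good_compl by simp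
  show ?case unfolding e by (rule good_compl, rule good_union[OF g c])
qed

definition RR where "RR = {z. \<exists>b\<in>Field W. \<forall>c\<in>Field W. (b,c) \<in> W \<longrightarrow> z \<in> UU c}"

lemma RR_BG: "RR \<in> BG"
proof -
  have "RR = (\<Union>b\<in>Field W. \<Inter>c\<in>{c\<in>Field W. (b,c) \<in> W}. UU c)" unfolding RR_def by blast
  moreover have "(\<Union>b\<in>Field W. \<Inter>c\<in>{c\<in>Field W. (b,c) \<in> W}. UU c) \<in> BG"
  proof (rule BG_UN[OF card_sub_W[OF order_refl]])
    fix b assume "b \<in> Field W"
    show "(\<Inter>c\<in>{c\<in>Field W. (b,c) \<in> W}. UU c) \<in> BG"
      by (rule BG_INT[OF card_sub_W]) (auto intro: UU_BG)
  qed
  ultimately show ?thesis by simp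
qed

lemma RR_univ:
  assumes "good A" shows "\<exists>\<xi>. \<forall>\<eta>. \<eta> \<in> A \<longleftrightarrow> (\<eta>, \<xi>) \<in> RR"
proof -
  obtain \<xi> b where b: "b \<in> Field W" and h: "\<forall>c\<in>Field W. (b,c) \<in> W \<longrightarrow> (\<forall>\<eta>. (\<eta>,\<xi>) \<in> UU c \<longleftrightarrow> \<eta> \<in> A)"
    using assms unfolding good_def by blast
  have hh: "\<And>c \<eta>. c \<in> Field W \<Longrightarrow> (b,c) \<in> W \<Longrightarrow> (\<eta>,\<xi>) \<in> UU c \<longleftrightarrow> \<eta> \<in> A"
    using h by simp
  have "\<eta> \<in> A \<longleftrightarrow> (\<eta>, \<xi>) \<in> RR" for \<eta>
  proof
    assume e: "\<eta> \<in> A"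
    have "\<forall>c\<in>Field W. (b,c) \<in> W \<longrightarrow> (\<eta>, \<xi>) \<in> UU c" using hh e by simp
    then show "(\<eta>, \<xi>) \<in> RR" unfolding RR_def using b by blast
  next
    assume "(\<eta>, \<xi>) \<in> RR"
    then obtain b' where b'1: "b' \<in> Field W" and b'2: "\<forall>c\<in>Field W. (b',c) \<in> W \<longrightarrow> (\<eta>,\<xi>) \<in> UU c"
      unfolding RR_def by blast
    show "\<eta> \<in> A"
    proof (cases "(b',b) \<in> W")
      case True
      then have "(\<eta>,\<xi>) \<in> UU b" using b'2 b by simp
      then show ?thesis using hh[OF b Wrefl[OF b]] by simp
    next
      case False then have bb: "(b,b') \<in> W" using Wtotal[OF b b'1] by simp
      have "(\<eta>,\<xi>) \<in> UU b'" using b'2 b'1 Wrefl[OF b'1] by simp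
      then show ?thesis using hh[OF b'1 bb] by simp
    qed
  qed
  then show ?thesis by (rule exI[of _ \<xi>, OF allI])
qed

end

theorem theorem3p18:
  fixes r :: "'a rel"
  assumes "Card_order r" and "Field r = UNIV" and "infinite (UNIV :: 'a set)"
    and "regularCard r"
  shows "\<exists>R. R \<in> borel_gen (basic_opens2 r) (cardSuc r) \<and>
           (\<forall>A \<in> borel_gen (basic_opens r) r.
              \<exists>\<xi>::'a \<Rightarrow> 'a. \<forall>\<eta>::'a \<Rightarrow> 'a. \<eta> \<in> A \<longleftrightarrow> (\<eta>, \<xi>) \<in> R)"
proof -
  have "|UNIV \<times> UNIV :: ('a \<times> 'a) set| =o |UNIV :: 'a set|"
    by (rule card_of_Times_same_infinite[OF assms(3)])
  then have "\<exists>p :: 'a \<times> 'a \<Rightarrow> 'a. bij_betw p UNIV UNIV"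
    using card_of_ordIso[of "UNIV :: ('a \<times> 'a) set" "UNIV :: 'a set"] by simp
  then obtain p :: "'a \<times> 'a \<Rightarrow> 'a" where p: "bij_betw p UNIV UNIV" by blast
  obtain a :: 'a where True by simp
  have "\<exists>b::'a. b \<notin> {a}" by (rule ex_new_if_finite[OF assms(3)]) simp
  then obtain b :: 'a where b: "b \<notin> {a}" by blast
  have "\<exists>c::'a. c \<notin> {a,b}" by (rule ex_new_if_finite[OF assms(3)]) simp
  then obtain c :: 'a where c: "c \<notin> {a,b}" by blast
  have U: "U3 r p a b c a b c" unfolding U3_def using assms(1-3) p b c by auto
  interpret U3 r p a b c a b c by (rule U)
  have "\<forall>A \<in> borel_gen (basic_opens r) r. \<exists>\<xi>::'a \<Rightarrow> 'a. \<forall>\<eta>::'a \<Rightarrow> 'a. \<eta> \<in> A \<longleftrightarrow> (\<eta>, \<xi>) \<in> RR"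
    using RR_univ good_all by simp
  then show ?thesis using RR_BG by blast
qed

end
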